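(* Let $I$ be an ideal on a cardinal $\kappa$ and let $\theta<\kappa$ be a regular cardinal. The following are equivalent: (1) $I$ is weakly $\theta$-saturated and $\theta$-indecomposable. (2) Whenever $\langle B_i:i<\theta\rangle$ is a $\subseteq$-increasing sequence of subsets of $\kappa$, there is $i^*<\theta$ such that $B_i=_I\bigcup_{j<\theta}B_j$ for all $i$ with $i^*\leq i<\theta$. (3) Whenever $\langle A_i:i<\theta\rangle$ is a sequence of $I$-positive subsets of $\kappa$, we have $\bigcap_{i<\theta}\bigcup_{i\leq j<\theta}A_j\neq\emptyset$. (4) If $\langle S_\alpha:\alpha<\kappa\rangle$ is a sequence of sets of ordinals with $|S_\alpha|<\theta$ for all $\alpha$, then every sequence $\langle h_i:i<\theta\rangle$ of functions in $\prod_{\alpha<\kappa}S_\alpha$ that is increasing in the pointwise order ($i<j$ implies $h_i(\alpha)\leq h_j(\alpha)$ for all $\alpha$) is eventually constant modulo $I$, i.e. there is $i^*<\theta$ with $h_i=_I h_{i^*}$ for all $i\geq i^*$. (5) Every function $f:\kappa\to\theta$ is bounded below $\theta$ almost everywhere, i.e. there is $\beta<\theta$ with $\{\alpha<\kappa: f(\alpha)\geq\beta\}\in I$.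
   Context: By an ideal on a cardinal $\kappa$ we mean a proper ideal on $\kappa$ containing all bounded subsets of $\kappa$. A set is $I$-positive if it is not in $I$. $A=_I B$ means $A\setminus B\in I$ and $B\setminus A\in I$; for functions, $f=_I g$ means $\{\alpha:f(\alpha)\neq g(\alpha)\}\in I$. $I$ is weakly $\theta$-saturated if there is no partition of $\kappa$ into $\theta$ pairwise disjoint $I$-positive sets. $I$ is $\theta$-indecomposable if whenever $\langle A_i:i<\theta\rangle$ are subsets of $\kappa$ with $\bigcup_{i<\theta}A_i\notin I$, there is $w\subseteq\theta$ with $|w|<\theta$ and $\bigcup_{i\in w}A_i\notin I$. *)

theory Defs
  imports Main
begin

text \<open>A cardinal kappa is represented by a cardinal-order relation k (Card_order k),
  i.e. an initial well-order; its elements are the ordinals below kappa, the field of k.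
  The (non-strict) order is membership in k; the strict order is (x,y) in k with x \<noteq> y.\<close>

definition bounded_in :: "'a rel \<Rightarrow> 'a set \<Rightarrow> bool" where
  "bounded_in k A \<longleftrightarrow> (\<exists>\<beta>\<in>Field k. \<forall>\<alpha>\<in>A. (\<alpha>, \<beta>) \<in> k \<and> \<alpha> \<noteq> \<beta>)"

definition ideal_on :: "'a rel \<Rightarrow> 'a set set \<Rightarrow> bool" where
  "ideal_on k I \<longleftrightarrow>
     I \<subseteq> Pow (Field k) \<and>
     (\<forall>A\<in>I. \<forall>B. B \<subseteq> A \<longrightarrow> B \<in> I) \<and>
     (\<forall>A\<in>I. \<forall>B\<in>I. A \<union> B \<in> I) \<and>
     Field k \<notin> I \<and>
     (\<forall>A. A \<subseteq> Field k \<and> bounded_in k A \<longrightarrow> A \<in> I)"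

definition eq_mod :: "'a set set \<Rightarrow> 'a set \<Rightarrow> 'a set \<Rightarrow> bool" where
  "eq_mod I A B \<longleftrightarrow> A - B \<in> I \<and> B - A \<in> I"

definition weakly_saturated :: "'a rel \<Rightarrow> 'b rel \<Rightarrow> 'a set set \<Rightarrow> bool" where
  "weakly_saturated k \<theta> I \<longleftrightarrow>
     \<not> (\<exists>P :: 'b \<Rightarrow> 'a set.
          (\<forall>i\<in>Field \<theta>. P i \<subseteq> Field k \<and> P i \<notin> I) \<and>
          (\<forall>i\<in>Field \<theta>. \<forall>j\<in>Field \<theta>. i \<noteq> j \<longrightarrow> P i \<inter> P j = {}) \<and>
          (\<Union>i\<in>Field \<theta>. P i) = Field k)"

definition indecomposable :: "'a rel \<Rightarrow> 'b rel \<Rightarrow> 'a set set \<Rightarrow> bool" where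
  "indecomposable k \<theta> I \<longleftrightarrow>
     (\<forall>A :: 'b \<Rightarrow> 'a set.
        (\<forall>i\<in>Field \<theta>. A i \<subseteq> Field k) \<and> (\<Union>i\<in>Field \<theta>. A i) \<notin> I \<longrightarrow>
        (\<exists>w. w \<subseteq> Field \<theta> \<and> ordLess2 (card_of w) \<theta> \<and> (\<Union>i\<in>w. A i) \<notin> I))"

end

theory Submission
  imports Defs
begin

definition P2 :: "'a rel \<Rightarrow> 'b rel \<Rightarrow> 'a set set \<Rightarrow> bool" where
  "P2 k \<theta> I \<equiv> (\<forall>B :: 'b \<Rightarrow> 'a set.
             (\<forall>i\<in>Field \<theta>. B i \<subseteq> Field k) \<and>
             (\<forall>i\<in>Field \<theta>. \<forall>j\<in>Field \<theta>. (i, j) \<in> \<theta> \<longrightarrow> B i \<subseteq> B j) \<longrightarrow>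
             (\<exists>i0\<in>Field \<theta>. \<forall>i\<in>Field \<theta>. (i0, i) \<in> \<theta> \<longrightarrow>
                 eq_mod I (B i) (\<Union>j\<in>Field \<theta>. B j)))"

definition P3 :: "'a rel \<Rightarrow> 'b rel \<Rightarrow> 'a set set \<Rightarrow> bool" where
  "P3 k \<theta> I \<equiv> (\<forall>A :: 'b \<Rightarrow> 'a set.
             (\<forall>i\<in>Field \<theta>. A i \<subseteq> Field k \<and> A i \<notin> I) \<longrightarrow>
             (\<Inter>i\<in>Field \<theta>. \<Union>j\<in>{j \<in> Field \<theta>. (i, j) \<in> \<theta>}. A j) \<noteq> {})"

definition P4 :: "'a rel \<Rightarrow> 'b rel \<Rightarrow> 'a set set \<Rightarrow> bool" where
  "P4 k \<theta> I \<equiv> (\<forall>r :: 'a rel. Well_order r \<longrightarrow>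
             (\<forall>(S :: 'a \<Rightarrow> 'a set) (h :: 'b \<Rightarrow> 'a \<Rightarrow> 'a).
               (\<forall>\<alpha>\<in>Field k. S \<alpha> \<subseteq> Field r \<and> ordLess2 (card_of (S \<alpha>)) \<theta>) \<and>
               (\<forall>i\<in>Field \<theta>. \<forall>\<alpha>\<in>Field k. h i \<alpha> \<in> S \<alpha>) \<and>
               (\<forall>i\<in>Field \<theta>. \<forall>j\<in>Field \<theta>. (i, j) \<in> \<theta> \<longrightarrow>
                   (\<forall>\<alpha>\<in>Field k. (h i \<alpha>, h j \<alpha>) \<in> r)) \<longrightarrow>
               (\<exists>i0\<in>Field \<theta>. \<forall>i\<in>Field \<theta>. (i0, i) \<in> \<theta> \<longrightarrow>
                   {\<alpha> \<in> Field k. h i \<alpha> \<noteq> h i0 \<alpha>} \<in> I)))"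

definition P5 :: "'a rel \<Rightarrow> 'b rel \<Rightarrow> 'a set set \<Rightarrow> bool" where
  "P5 k \<theta> I \<equiv> (\<forall>f :: 'a \<Rightarrow> 'b. (\<forall>\<alpha>\<in>Field k. f \<alpha> \<in> Field \<theta>) \<longrightarrow>
             (\<exists>\<beta>\<in>Field \<theta>. {\<alpha> \<in> Field k. (\<beta>, f \<alpha>) \<in> \<theta>} \<in> I))"

context
  fixes k :: "'a rel" and th :: "'b rel" and I :: "'a set set"
  assumes kappa: "Card_order k"
    and ideal: "ideal_on k I"
    and thC: "Cinfinite th" and threg: "regularCard th"
    and less: "ordLess2 th k"
begin

lemma th_wo: "Well_order th"
  using thC by (simp add: card_order_on_well_order_on)

lemma th_refl: "i \<in> Field th \<Longrightarrow> (i,i) \<in> th"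
  by (rule refl_onD[OF wo_rel.REFL[OF th_wo[unfolded wo_rel_def[symmetric]]]])

lemma th_total: "i \<in> Field th \<Longrightarrow> j \<in> Field th \<Longrightarrow> (i,j) \<in> th \<or> (j,i) \<in> th"
  using wo_rel.TOTALS[OF th_wo[unfolded wo_rel_def[symmetric]]] by simp

lemma th_trans: "(i,j) \<in> th \<Longrightarrow> (j,l) \<in> th \<Longrightarrow> (i,l) \<in> th"
  by (rule transD[OF wo_rel.TRANS[OF th_wo[unfolded wo_rel_def[symmetric]]]])

lemma th_antisym: "(i,j) \<in> th \<Longrightarrow> (j,i) \<in> th \<Longrightarrow> i = j"
  by (rule antisymD[OF wo_rel.ANTISYM[OF th_wo[unfolded wo_rel_def[symmetric]]]])

lemma th_field: "(i,j) \<in> th \<Longrightarrow> i \<in> Field th \<and> j \<in> Field th"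
  unfolding Field_def by blast

lemma th_succ: "i \<in> Field th \<Longrightarrow> \<exists>j\<in>Field th. i \<noteq> j \<and> (i,j) \<in> th"
  using thC by (simp add: Cinfinite_limit)

lemma th_ne: "Field th \<noteq> {}"
  using thC by (auto simp: cinfinite_def)

lemma th_bound: "A \<subseteq> Field th \<Longrightarrow> ordLess2 (card_of A) th \<Longrightarrow> \<exists>a\<in>Field th. \<forall>b\<in>A. (b,a) \<in> th"
proof -
  assume A: "A \<subseteq> Field th" "ordLess2 (card_of A) th"
  have "\<not> cofinal A th"
  proof
    assume "cofinal A th"
    then have "ordIso2 (card_of A) th" using threg A unfolding regularCard_def by blast
    then show False using A not_ordLess_ordIso by blast
  qed
  then obtain a where a: "a \<in> Field th" "\<forall>b\<in>A. \<not>(a \<noteq> b \<and> (a,b) \<in> th)"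
    unfolding cofinal_def by blast
  have "\<forall>b\<in>A. (b,a) \<in> th"
  proof
    fix b assume b: "b \<in> A"
    then have "b \<in> Field th" using A by auto
    then show "(b,a) \<in> th" using a b th_total[of a b] th_refl[of a] by auto
  qed
  with a show ?thesis by blast
qed

lemma th_bound_strict: "A \<subseteq> Field th \<Longrightarrow> ordLess2 (card_of A) th \<Longrightarrow> \<exists>a\<in>Field th. \<forall>b\<in>A. (b,a) \<in> th \<and> b \<noteq> a"
proof -
  assume A: "A \<subseteq> Field th" "ordLess2 (card_of A) th"
  then obtain a where a: "a \<in> Field th" "\<forall>b\<in>A. (b,a) \<in> th" using th_bound by blast
  obtain c where c: "c \<in> Field th" "a \<noteq> c" "(a,c) \<in> th" using th_succ a by blast
  have "\<forall>b\<in>A. (b,c) \<in> th \<and> b \<noteq> c"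
  proof
    fix b assume b: "b \<in> A"
    have ba: "(b,a) \<in> th" using a b by blast
    have "(b,c) \<in> th" using th_trans[OF ba c(3)] .
    moreover have "b \<noteq> c" using th_antisym[of a c] ba c by auto
    ultimately show "(b,c) \<in> th \<and> b \<noteq> c" by simp
  qed
  with c show ?thesis by blast
qed

lemma th_underS: "a \<in> Field th \<Longrightarrow> ordLess2 (card_of (underS th a)) th"
  using thC by (simp add: card_of_underS)

lemma th_underS_sub: "underS th a \<subseteq> Field th"
  by (auto simp: underS_def Field_def)

lemma I_down: "A \<in> I \<Longrightarrow> B \<subseteq> A \<Longrightarrow> B \<in> I"
  using ideal unfolding ideal_on_def by auto

lemma I_un: "A \<in> I \<Longrightarrow> B \<in> I \<Longrightarrow> A \<union> B \<in> I"
  using ideal unfolding ideal_on_def by auto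

lemma I_Field: "Field k \<notin> I"
  using ideal unfolding ideal_on_def by simp

lemma I_pos: "A \<notin> I \<Longrightarrow> A \<subseteq> B \<Longrightarrow> B \<notin> I"
  using I_down by blast

lemma k_inf: "infinite (Field k)"
proof -
  have "ordLeq3 (card_of (Field th)) (card_of (Field k))" by (rule card_of_mono2[OF ordLess_imp_ordLeq[OF less]])
  then show ?thesis using thC card_of_ordLeq_infinite[of "Field th" "Field k"] by (simp add: cinfinite_def)
qed

lemma I_empty: "{} \<in> I"
proof -
  obtain b where "b \<in> Field k" using k_inf by fastforce
  then have "bounded_in k {}" unfolding bounded_in_def by blast
  then show ?thesis using ideal unfolding ideal_on_def by simp
qed


lemma c5_c3:
  assumes C5: "P5 k th I"
  shows "P3 k th I"
  unfolding P3_def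
proof (intro allI impI notI)
  fix A :: "'b \<Rightarrow> 'a set"
  assume A: "\<forall>i\<in>Field th. A i \<subseteq> Field k \<and> A i \<notin> I"
    and E: "(\<Inter>i\<in>Field th. \<Union>j\<in>{j \<in> Field th. (i, j) \<in> th}. A j) = {}"
  have ex: "\<exists>i. i \<in> Field th \<and> (\<forall>j\<in>Field th. (i,j) \<in> th \<longrightarrow> x \<notin> A j)" for x
  proof -
    have "x \<notin> (\<Inter>i\<in>Field th. \<Union>j\<in>{j \<in> Field th. (i, j) \<in> th}. A j)" using E by simp
    then show ?thesis by auto
  qed
  define g where "g x = (SOME i. i \<in> Field th \<and> (\<forall>j\<in>Field th. (i,j) \<in> th \<longrightarrow> x \<notin> A j))" for x
  have g: "g x \<in> Field th \<and> (\<forall>j\<in>Field th. (g x,j) \<in> th \<longrightarrow> x \<notin> A j)" for x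
    unfolding g_def by (rule someI_ex[OF ex])
  have "\<forall>\<alpha>\<in>Field k. g \<alpha> \<in> Field th" using g by simp
  then obtain \<beta> where b: "\<beta> \<in> Field th" "{\<alpha> \<in> Field k. (\<beta>, g \<alpha>) \<in> th} \<in> I"
    using C5 unfolding P5_def by blast
  have "A \<beta> \<subseteq> {\<alpha> \<in> Field k. (\<beta>, g \<alpha>) \<in> th}"
  proof
    fix x assume x: "x \<in> A \<beta>"
    have xk: "x \<in> Field k" using A b(1) x by blast
    have "(g x, \<beta>) \<notin> th" using g[of x] b(1) x by blast
    then have "(\<beta>, g x) \<in> th" using th_total[of \<beta> "g x"] b(1) g[of x] by blast
    then show "x \<in> {\<alpha> \<in> Field k. (\<beta>, g \<alpha>) \<in> th}" using xk by simp
  qed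
  then have "A \<beta> \<in> I" using I_down b(2) by blast
  then show False using A b(1) by blast
qed

lemma c3_ws:
  assumes C3: "P3 k th I"
  shows "weakly_saturated k th I"
  unfolding weakly_saturated_def
proof
  assume "\<exists>P :: 'b \<Rightarrow> 'a set.
          (\<forall>i\<in>Field th. P i \<subseteq> Field k \<and> P i \<notin> I) \<and>
          (\<forall>i\<in>Field th. \<forall>j\<in>Field th. i \<noteq> j \<longrightarrow> P i \<inter> P j = {}) \<and>
          (\<Union>i\<in>Field th. P i) = Field k"
  then obtain P :: "'b \<Rightarrow> 'a set" where P1: "\<forall>i\<in>Field th. P i \<subseteq> Field k \<and> P i \<notin> I"
    and P2: "\<forall>i\<in>Field th. \<forall>j\<in>Field th. i \<noteq> j \<longrightarrow> P i \<inter> P j = {}"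
    and P3: "(\<Union>i\<in>Field th. P i) = Field k" by blast
  have "(\<Inter>i\<in>Field th. \<Union>j\<in>{j \<in> Field th. (i, j) \<in> th}. P j) \<noteq> {}"
    using C3 P1 unfolding P3_def by blast
  then obtain x where x: "x \<in> (\<Inter>i\<in>Field th. \<Union>j\<in>{j \<in> Field th. (i, j) \<in> th}. P j)"
    by blast
  obtain i where i: "i \<in> Field th" using th_ne by blast
  then obtain j0 where j0: "j0 \<in> Field th" "x \<in> P j0" using x by blast
  obtain c where c: "c \<in> Field th" "j0 \<noteq> c" "(j0,c) \<in> th" using th_succ[OF j0(1)] by blast
  then obtain j where j: "j \<in> Field th" "(c,j) \<in> th" "x \<in> P j" using x by blast
  have "j \<noteq> j0" using th_antisym[of c j0] c j by auto
  then show False using P2 j j0 by blast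
qed

lemma small_union:
  assumes N: "\<not> (\<exists>w. w \<subseteq> Field th \<and> ordLess2 (card_of w) th \<and> (\<Union>i\<in>w. A i) \<notin> I)"
    and i: "i \<in> Field th"
  shows "(\<Union>l\<in>underS th i. A l) \<in> I"
proof -
  have "\<not> (underS th i \<subseteq> Field th \<and> ordLess2 (card_of (underS th i)) th \<and> (\<Union>l\<in>underS th i. A l) \<notin> I)"
    using N by blast
  then show ?thesis using th_underS[OF i] th_underS_sub by blast
qed

lemma c3_ind:
  assumes C3: "P3 k th I" shows "indecomposable k th I"
  unfolding indecomposable_def
proof (intro allI impI)
  fix A :: "'b \<Rightarrow> 'a set"
  assume H: "(\<forall>i\<in>Field th. A i \<subseteq> Field k) \<and> (\<Union>i\<in>Field th. A i) \<notin> I"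
  show "\<exists>w. w \<subseteq> Field th \<and> ordLess2 (card_of w) th \<and> (\<Union>i\<in>w. A i) \<notin> I"
  proof (rule ccontr)
    assume N: "\<not> (\<exists>w. w \<subseteq> Field th \<and> ordLess2 (card_of w) th \<and> (\<Union>i\<in>w. A i) \<notin> I)"
    define U where "U = (\<Union>i\<in>Field th. A i)"
    define A' where "A' i = U - (\<Union>l\<in>underS th i. A l)" for i
    have A'pos: "\<forall>i\<in>Field th. A' i \<subseteq> Field k \<and> A' i \<notin> I"
    proof
      fix i assume i: "i \<in> Field th"
      have "A' i \<subseteq> Field k" using H unfolding A'_def U_def by blast
      moreover have "A' i \<notin> I"
      proof
        assume "A' i \<in> I"
        then have "A' i \<union> (\<Union>l\<in>underS th i. A l) \<in> I" using I_un small_union[OF N i] by blast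
        moreover have "U \<subseteq> A' i \<union> (\<Union>l\<in>underS th i. A l)" unfolding A'_def by blast
        ultimately have "U \<in> I" using I_down by blast
        then show False using H U_def by simp
      qed
      ultimately show "A' i \<subseteq> Field k \<and> A' i \<notin> I" by simp
    qed
    have "(\<Inter>i\<in>Field th. \<Union>j\<in>{j \<in> Field th. (i, j) \<in> th}. A' j) \<noteq> {}"
      using C3 A'pos unfolding P3_def by blast
    then obtain x where x: "x \<in> (\<Inter>i\<in>Field th. \<Union>j\<in>{j \<in> Field th. (i, j) \<in> th}. A' j)"
      by blast
    obtain i0 where i0: "i0 \<in> Field th" using th_ne by blast
    then have "x \<in> U" using x unfolding A'_def by blast
    then obtain l where l: "l \<in> Field th" "x \<in> A l" unfolding U_def by blast
    obtain c where c: "c \<in> Field th" "l \<noteq> c" "(l,c) \<in> th" using th_succ[OF l(1)] by blast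
    then obtain j where j: "j \<in> Field th" "(c,j) \<in> th" "x \<in> A' j" using x by blast
    have "l \<noteq> j"
    proof
      assume "l = j"
      then have "c = l" using th_antisym[of c l] c(3) j(2) by simp
      then show False using c(2) by simp
    qed
    then have "l \<in> underS th j" unfolding underS_def using th_trans[OF c(3) j(2)] by simp
    then show False using j(3) l(2) unfolding A'_def by blast
  qed
qed

lemma c5_c2: assumes C5: "P5 k th I" shows "P2 k th I"
  unfolding P2_def
proof (intro allI impI)
  fix B :: "'b \<Rightarrow> 'a set"
  assume H: "(\<forall>i\<in>Field th. B i \<subseteq> Field k) \<and> (\<forall>i\<in>Field th. \<forall>j\<in>Field th. (i, j) \<in> th \<longrightarrow> B i \<subseteq> B j)"
  define U where "U = (\<Union>j\<in>Field th. B j)"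
  obtain z where z: "z \<in> Field th" using th_ne by blast
  define g where "g x = (if x \<in> U then (SOME j. j \<in> Field th \<and> x \<in> B j) else z)" for x
  have g: "g x \<in> Field th \<and> (x \<in> U \<longrightarrow> x \<in> B (g x))" for x
  proof (cases "x \<in> U")
    case True
    then have "\<exists>j. j \<in> Field th \<and> x \<in> B j" unfolding U_def by blast
    then have "(SOME j. j \<in> Field th \<and> x \<in> B j) \<in> Field th \<and> x \<in> B (SOME j. j \<in> Field th \<and> x \<in> B j)"
      by (rule someI_ex)
    then show ?thesis using True unfolding g_def by simp
  next
    case False
    then show ?thesis using z unfolding g_def by simp
  qed
  have "\<forall>\<alpha>\<in>Field k. g \<alpha> \<in> Field th" using g by simp
  then obtain \<beta> where b: "\<beta> \<in> Field th" "{\<alpha> \<in> Field k. (\<beta>, g \<alpha>) \<in> th} \<in> I"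
    using C5 unfolding P5_def by blast
  have "\<forall>i\<in>Field th. (\<beta>, i) \<in> th \<longrightarrow> eq_mod I (B i) U"
  proof (intro ballI impI)
    fix i assume i: "i \<in> Field th" "(\<beta>,i) \<in> th"
    have e: "B i - U = {}" unfolding U_def using i by blast
    have "U - B i \<subseteq> {\<alpha> \<in> Field k. (\<beta>, g \<alpha>) \<in> th}"
    proof
      fix x assume x: "x \<in> U - B i"
      then have xk: "x \<in> Field k" using H unfolding U_def by blast
      have "(g x, i) \<notin> th"
      proof
        assume "(g x, i) \<in> th"
        then have "B (g x) \<subseteq> B i" using H g[of x] i(1) by blast
        then show False using g[of x] x by blast
      qed
      then have "(i, g x) \<in> th" using th_total[OF i(1), of "g x"] g[of x] by blast
      then have "(\<beta>, g x) \<in> th" using th_trans[OF i(2)] by blast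
      then show "x \<in> {\<alpha> \<in> Field k. (\<beta>, g \<alpha>) \<in> th}" using xk by simp
    qed
    then have "U - B i \<in> I" using I_down[OF b(2)] by simp
    moreover have "B i - U \<in> I" unfolding e by (rule I_empty)
    ultimately show "eq_mod I (B i) U" unfolding eq_mod_def by simp
  qed
  then show "\<exists>i0\<in>Field th. \<forall>i\<in>Field th. (i0, i) \<in> th \<longrightarrow> eq_mod I (B i) (\<Union>j\<in>Field th. B j)"
    using b(1) unfolding U_def by blast
qed


lemma underS_mono: assumes ij: "(i,j) \<in> th" shows "underS th i \<subseteq> underS th j"
proof
  fix l assume l: "l \<in> underS th i"
  then have li: "(l,i) \<in> th" "l \<noteq> i" unfolding underS_def by auto
  have lj: "(l,j) \<in> th" using th_trans[OF li(1) ij] .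
  have "l \<noteq> j"
  proof
    assume "l = j"
    then have "i = j" using th_antisym[OF ij] li(1) by simp
    then show False using li(2) \<open>l = j\<close> by simp
  qed
  then show "l \<in> underS th j" using lj unfolding underS_def by simp
qed

lemma underS_union_mono: "(i,j) \<in> th \<Longrightarrow> (\<Union>l\<in>underS th i. P l) \<subseteq> (\<Union>l\<in>underS th j. P l)"
  using underS_mono by blast

lemma c2_ws: assumes C2: "P2 k th I" shows "weakly_saturated k th I"
  unfolding weakly_saturated_def
proof
  assume "\<exists>P :: 'b \<Rightarrow> 'a set.
          (\<forall>i\<in>Field th. P i \<subseteq> Field k \<and> P i \<notin> I) \<and>
          (\<forall>i\<in>Field th. \<forall>j\<in>Field th. i \<noteq> j \<longrightarrow> P i \<inter> P j = {}) \<and>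
          (\<Union>i\<in>Field th. P i) = Field k"
  then obtain P :: "'b \<Rightarrow> 'a set" where P1: "\<forall>i\<in>Field th. P i \<subseteq> Field k \<and> P i \<notin> I"
    and P2: "\<forall>i\<in>Field th. \<forall>j\<in>Field th. i \<noteq> j \<longrightarrow> P i \<inter> P j = {}"
    and P3: "(\<Union>i\<in>Field th. P i) = Field k" by blast
  define B where "B i = (\<Union>j\<in>underS th i. P j)" for i
  have Bk: "\<forall>i\<in>Field th. B i \<subseteq> Field k"
  proof (intro ballI subsetI)
    fix i x assume "x \<in> B i"
    then obtain l where l: "l \<in> underS th i" "x \<in> P l" unfolding B_def by blast
    have "l \<in> Field th" using l(1) th_underS_sub by blast
    then show "x \<in> Field k" using P1 l(2) by blast
  qed
  have Bmono: "\<forall>i\<in>Field th. \<forall>j\<in>Field th. (i, j) \<in> th \<longrightarrow> B i \<subseteq> B j"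
    unfolding B_def by (intro ballI impI underS_union_mono)
  obtain i0 where i0: "i0 \<in> Field th" "\<forall>i\<in>Field th. (i0,i)\<in>th \<longrightarrow> eq_mod I (B i) (\<Union>j\<in>Field th. B j)"
    using C2[unfolded P2_def, rule_format, OF conjI[OF Bk Bmono]] by blast
  have e: "eq_mod I (B i0) (\<Union>j\<in>Field th. B j)" using i0(2) th_refl[OF i0(1)] i0(1) by blast
  obtain c where c: "c \<in> Field th" "i0 \<noteq> c" "(i0,c) \<in> th" using th_succ[OF i0(1)] by blast
  have "i0 \<in> underS th c" unfolding underS_def using c by simp
  then have "P i0 \<subseteq> B c" unfolding B_def by blast
  moreover have "P i0 \<inter> B i0 = {}"
  proof -
    have "P i0 \<inter> P l = {}" if l: "l \<in> underS th i0" for l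
    proof -
      have "l \<in> Field th" using l th_underS_sub by blast
      moreover have "l \<noteq> i0" using l unfolding underS_def by simp
      ultimately show ?thesis using P2 i0(1) by blast
    qed
    then show ?thesis unfolding B_def by blast
  qed
  ultimately have "P i0 \<subseteq> (\<Union>j\<in>Field th. B j) - B i0" using c(1) by auto
  moreover have "P i0 \<notin> I" using P1 i0(1) by blast
  ultimately have "(\<Union>j\<in>Field th. B j) - B i0 \<notin> I" using I_pos by blast
  then show False using e unfolding eq_mod_def by blast
qed

lemma c2_ind: assumes C2: "P2 k th I" shows "indecomposable k th I"
  unfolding indecomposable_def
proof (intro allI impI)
  fix A :: "'b \<Rightarrow> 'a set"
  assume H: "(\<forall>i\<in>Field th. A i \<subseteq> Field k) \<and> (\<Union>i\<in>Field th. A i) \<notin> I"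
  show "\<exists>w. w \<subseteq> Field th \<and> ordLess2 (card_of w) th \<and> (\<Union>i\<in>w. A i) \<notin> I"
  proof (rule ccontr)
    assume N: "\<not> (\<exists>w. w \<subseteq> Field th \<and> ordLess2 (card_of w) th \<and> (\<Union>i\<in>w. A i) \<notin> I)"
    define B where "B i = (\<Union>j\<in>underS th i. A j)" for i
    have Bk: "\<forall>i\<in>Field th. B i \<subseteq> Field k"
  proof (intro ballI subsetI)
    fix i x assume "x \<in> B i"
    then obtain l where l: "l \<in> underS th i" "x \<in> A l" unfolding B_def by blast
    have "l \<in> Field th" using l(1) th_underS_sub by blast
    then show "x \<in> Field k" using H l(2) by blast
  qed
    have Bmono: "\<forall>i\<in>Field th. \<forall>j\<in>Field th. (i, j) \<in> th \<longrightarrow> B i \<subseteq> B j"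
      unfolding B_def by (intro ballI impI underS_union_mono)
    obtain i0 where i0: "i0 \<in> Field th" "\<forall>i\<in>Field th. (i0,i)\<in>th \<longrightarrow> eq_mod I (B i) (\<Union>j\<in>Field th. B j)"
      using C2[unfolded P2_def, rule_format, OF conjI[OF Bk Bmono]] by blast
    have e: "eq_mod I (B i0) (\<Union>j\<in>Field th. B j)" using i0(2) th_refl[OF i0(1)] i0(1) by blast
    have BI: "B i0 \<in> I" unfolding B_def by (rule small_union[OF N i0(1)])
    have "(\<Union>j\<in>Field th. B j) - B i0 \<in> I" using e unfolding eq_mod_def by blast
    then have "((\<Union>j\<in>Field th. B j) - B i0) \<union> B i0 \<in> I" by (rule I_un[OF _ BI])
    then have UB: "(\<Union>j\<in>Field th. B j) \<in> I"
      by (rule I_down) blast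
    have "(\<Union>i\<in>Field th. A i) \<subseteq> (\<Union>j\<in>Field th. B j)"
    proof
      fix x assume "x \<in> (\<Union>i\<in>Field th. A i)"
      then obtain l where l: "l \<in> Field th" "x \<in> A l" by blast
      obtain c where c: "c \<in> Field th" "l \<noteq> c" "(l,c) \<in> th" using th_succ[OF l(1)] by blast
      have "l \<in> underS th c" unfolding underS_def using c by simp
      then show "x \<in> (\<Union>j\<in>Field th. B j)" unfolding B_def using l c(1) by blast
    qed
    then show False using UB H I_down by blast
  qed
qed


lemma c5_c4: assumes C5: "P5 k th I" shows "P4 k th I"
  unfolding P4_def
proof (intro allI impI)
  fix r :: "'a rel" and S :: "'a \<Rightarrow> 'a set" and h :: "'b \<Rightarrow> 'a \<Rightarrow> 'a"
  assume wr: "Well_order r"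
  assume H: "(\<forall>\<alpha>\<in>Field k. S \<alpha> \<subseteq> Field r \<and> ordLess2 (card_of (S \<alpha>)) th) \<and>
               (\<forall>i\<in>Field th. \<forall>\<alpha>\<in>Field k. h i \<alpha> \<in> S \<alpha>) \<and>
               (\<forall>i\<in>Field th. \<forall>j\<in>Field th. (i, j) \<in> th \<longrightarrow>
                   (\<forall>\<alpha>\<in>Field k. (h i \<alpha>, h j \<alpha>) \<in> r))"
  then have HS: "\<And>\<alpha>. \<alpha>\<in>Field k \<Longrightarrow> ordLess2 (card_of (S \<alpha>)) th"
    and HH: "\<And>i \<alpha>. i\<in>Field th \<Longrightarrow> \<alpha>\<in>Field k \<Longrightarrow> h i \<alpha> \<in> S \<alpha>"
    and Hm: "\<And>i j \<alpha>. i\<in>Field th \<Longrightarrow> j\<in>Field th \<Longrightarrow> (i, j) \<in> th \<Longrightarrow> \<alpha>\<in>Field k \<Longrightarrow> (h i \<alpha>, h j \<alpha>) \<in> r"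
    by blast+
  have rantisym: "antisym r" using wo_rel.ANTISYM[of r] wr unfolding wo_rel_def by simp
  have stab: "\<exists>d. d \<in> Field th \<and> (\<forall>j\<in>Field th. (d,j) \<in> th \<longrightarrow> h j \<alpha> = h d \<alpha>)"
    if a: "\<alpha> \<in> Field k" for \<alpha>
  proof -
    define V where "V = (\<lambda>i. h i \<alpha>) ` Field th"
    define p where "p v = (SOME i. i \<in> Field th \<and> h i \<alpha> = v)" for v
    have p: "p v \<in> Field th \<and> h (p v) \<alpha> = v" if "v \<in> V" for v
    proof -
      have "\<exists>i. i \<in> Field th \<and> h i \<alpha> = v" using that unfolding V_def by blast
      then show ?thesis unfolding p_def by (rule someI_ex)
    qed
    have VS: "V \<subseteq> S \<alpha>" unfolding V_def using HH a by blast
    have "ordLeq3 (card_of (p ` V)) (card_of V)" by (rule card_of_image)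
    moreover have "ordLeq3 (card_of V) (card_of (S \<alpha>))" by (rule card_of_mono1[OF VS])
    ultimately have "ordLeq3 (card_of (p ` V)) (card_of (S \<alpha>))" by (rule ordLeq_transitive)
    then have small: "ordLess2 (card_of (p ` V)) th" using HS[OF a] by (rule ordLeq_ordLess_trans)
    have pV: "p ` V \<subseteq> Field th" using p by blast
    obtain d where d: "d \<in> Field th" "\<forall>b\<in>p ` V. (b,d) \<in> th" using th_bound[OF pV small] by blast
    have "\<forall>j\<in>Field th. (d,j) \<in> th \<longrightarrow> h j \<alpha> = h d \<alpha>"
    proof (intro ballI impI)
      fix j assume j: "j \<in> Field th" "(d,j) \<in> th"
      define v where "v = h j \<alpha>"
      have vV: "v \<in> V" unfolding V_def v_def using j(1) by blast
      have pv: "p v \<in> Field th" "h (p v) \<alpha> = v" using p[OF vV] by auto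
      have "(p v, d) \<in> th" using d(2) vV by blast
      then have "(h (p v) \<alpha>, h d \<alpha>) \<in> r" using Hm[OF pv(1) d(1) _ a] by blast
      then have 1: "(v, h d \<alpha>) \<in> r" using pv(2) by simp
      have 2: "(h d \<alpha>, v) \<in> r" unfolding v_def using Hm[OF d(1) j(1) j(2) a] .
      show "h j \<alpha> = h d \<alpha>" using antisymD[OF rantisym 1 2] unfolding v_def by simp
    qed
    then show ?thesis using d(1) by blast
  qed
  define g where "g \<alpha> = (SOME d. d \<in> Field th \<and> (\<forall>j\<in>Field th. (d,j) \<in> th \<longrightarrow> h j \<alpha> = h d \<alpha>))" for \<alpha>
  have g: "g \<alpha> \<in> Field th \<and> (\<forall>j\<in>Field th. (g \<alpha>,j) \<in> th \<longrightarrow> h j \<alpha> = h (g \<alpha>) \<alpha>)"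
    if "\<alpha> \<in> Field k" for \<alpha>
    unfolding g_def by (rule someI_ex[OF stab[OF that]])
  have "\<forall>\<alpha>\<in>Field k. g \<alpha> \<in> Field th" using g by blast
  then obtain \<beta> where b: "\<beta> \<in> Field th" "{\<alpha> \<in> Field k. (\<beta>, g \<alpha>) \<in> th} \<in> I"
    using C5 unfolding P5_def by blast
  have "\<forall>i\<in>Field th. (\<beta>, i) \<in> th \<longrightarrow> {\<alpha> \<in> Field k. h i \<alpha> \<noteq> h \<beta> \<alpha>} \<in> I"
  proof (intro ballI impI)
    fix i assume i: "i \<in> Field th" "(\<beta>, i) \<in> th"
    have "{\<alpha> \<in> Field k. h i \<alpha> \<noteq> h \<beta> \<alpha>} \<subseteq> {\<alpha> \<in> Field k. (\<beta>, g \<alpha>) \<in> th}"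
    proof (rule subsetI, rule ccontr)
      fix \<alpha> assume x: "\<alpha> \<in> {\<alpha> \<in> Field k. h i \<alpha> \<noteq> h \<beta> \<alpha>}" and nx: "\<alpha> \<notin> {\<alpha> \<in> Field k. (\<beta>, g \<alpha>) \<in> th}"
      have ak: "\<alpha> \<in> Field k" and ne: "h i \<alpha> \<noteq> h \<beta> \<alpha>" using x by auto
      have ga: "g \<alpha> \<in> Field th" and gs: "\<forall>j\<in>Field th. (g \<alpha>,j) \<in> th \<longrightarrow> h j \<alpha> = h (g \<alpha>) \<alpha>"
        using g[OF ak] by auto
      have "(\<beta>, g \<alpha>) \<notin> th" using nx ak by simp
      then have gb: "(g \<alpha>, \<beta>) \<in> th" using th_total[OF b(1) ga] by simp
      have gi: "(g \<alpha>, i) \<in> th" using th_trans[OF gb i(2)] .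
      have "h \<beta> \<alpha> = h (g \<alpha>) \<alpha>" using gs b(1) gb by blast
      moreover have "h i \<alpha> = h (g \<alpha>) \<alpha>" using gs i(1) gi by blast
      ultimately show False using ne by simp
    qed
    then show "{\<alpha> \<in> Field k. h i \<alpha> \<noteq> h \<beta> \<alpha>} \<in> I" using I_down[OF b(2)] by simp
  qed
  then show "\<exists>i0\<in>Field th. \<forall>i\<in>Field th. (i0, i) \<in> th \<longrightarrow> {\<alpha> \<in> Field k. h i \<alpha> \<noteq> h i0 \<alpha>} \<in> I"
    using b(1) by blast
qed


lemma c4_c5: assumes C4: "P4 k th I" shows "P5 k th I"
  unfolding P5_def
proof (intro allI impI)
  fix f :: "'a \<Rightarrow> 'b" assume f: "\<forall>\<alpha>\<in>Field k. f \<alpha> \<in> Field th"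
  have "ordLeq3 (card_of (Field th)) (card_of (Field k))"
    by (rule card_of_mono2[OF ordLess_imp_ordLeq[OF less]])
  then obtain e where e: "inj_on e (Field th)" "e ` Field th \<subseteq> Field k"
    using card_of_ordLeq[of "Field th" "Field k"] by blast
  define r where "r = dir_image th e"
  have wr: "Well_order r" unfolding r_def using Well_order_dir_image[OF th_wo e(1)] .
  have rI: "(e x, e y) \<in> r" if "(x,y) \<in> th" for x y
    unfolding r_def dir_image_def using that by blast
  have Fr: "Field r = e ` Field th" unfolding r_def by (rule dir_image_Field)
  define mn where "mn i j = (if (i,j) \<in> th then i else j)" for i j
  define S where "S \<alpha> = e ` under th (f \<alpha>)" for \<alpha>
  define h where "h i \<alpha> = e (mn i (f \<alpha>))" for i \<alpha>
  have under_sub: "under th x \<subseteq> Field th" for x unfolding under_def Field_def by blast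
  have H1: "\<forall>\<alpha>\<in>Field k. S \<alpha> \<subseteq> Field r \<and> ordLess2 (card_of (S \<alpha>)) th"
  proof
    fix \<alpha> assume a: "\<alpha> \<in> Field k"
    have "S \<alpha> \<subseteq> Field r" unfolding S_def Fr using under_sub by blast
    moreover have "ordLess2 (card_of (S \<alpha>)) th"
    proof -
      obtain c where c: "c \<in> Field th" "f \<alpha> \<noteq> c" "(f \<alpha>,c) \<in> th" using th_succ f a by blast
      have "under th (f \<alpha>) \<subseteq> underS th c"
      proof
        fix x assume "x \<in> under th (f \<alpha>)"
        then have x: "(x, f \<alpha>) \<in> th" unfolding under_def by simp
        have "(x,c) \<in> th" using th_trans[OF x c(3)] .
        moreover have "x \<noteq> c"
        proof
          assume "x = c" then have "f \<alpha> = c" using th_antisym[OF c(3)] x by simp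
          then show False using c(2) by simp
        qed
        ultimately show "x \<in> underS th c" unfolding underS_def by simp
      qed
      then have "ordLeq3 (card_of (under th (f \<alpha>))) (card_of (underS th c))" by (rule card_of_mono1)
      then have 1: "ordLess2 (card_of (under th (f \<alpha>))) th" using th_underS[OF c(1)] by (rule ordLeq_ordLess_trans)
      have "ordLeq3 (card_of (S \<alpha>)) (card_of (under th (f \<alpha>)))" unfolding S_def by (rule card_of_image)
      then show ?thesis using 1 by (rule ordLeq_ordLess_trans)
    qed
    ultimately show "S \<alpha> \<subseteq> Field r \<and> ordLess2 (card_of (S \<alpha>)) th" by simp
  qed
  have H2: "\<forall>i\<in>Field th. \<forall>\<alpha>\<in>Field k. h i \<alpha> \<in> S \<alpha>"
  proof (intro ballI)
    fix i \<alpha> assume i: "i \<in> Field th" and a: "\<alpha> \<in> Field k"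
    have "mn i (f \<alpha>) \<in> under th (f \<alpha>)"
      unfolding mn_def under_def using th_refl[of "f \<alpha>"] f a by auto
    then show "h i \<alpha> \<in> S \<alpha>" unfolding h_def S_def by blast
  qed
  have mono: "(mn i x, mn j x) \<in> th" if i: "i \<in> Field th" and j: "j \<in> Field th" and x: "x \<in> Field th"
    and ij: "(i,j) \<in> th" for i j x
  proof (cases "(i,x) \<in> th")
    case True
    then show ?thesis
    proof (cases "(j,x) \<in> th")
      case True2: True
      then show ?thesis unfolding mn_def using True ij by simp
    next
      case False
      then show ?thesis unfolding mn_def using True by simp
    qed
  next
    case False
    then have xi: "(x,i) \<in> th" using th_total[OF i x] by simp
    then have xj: "(x,j) \<in> th" using th_trans[OF xi ij] by simp
    show ?thesis
    proof (cases "(j,x) \<in> th")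
      case True
      then have "j = x" using th_antisym[OF True xj] by simp
      then show ?thesis unfolding mn_def using False th_refl[OF x] by simp
    next
      case False2: False
      then show ?thesis unfolding mn_def using False th_refl[OF x] by simp
    qed
  qed
  have H3: "\<forall>i\<in>Field th. \<forall>j\<in>Field th. (i, j) \<in> th \<longrightarrow> (\<forall>\<alpha>\<in>Field k. (h i \<alpha>, h j \<alpha>) \<in> r)"
  proof (intro ballI impI)
    fix i j \<alpha> assume i: "i \<in> Field th" and j: "j \<in> Field th" and ij: "(i,j) \<in> th" and a: "\<alpha> \<in> Field k"
    have "(mn i (f \<alpha>), mn j (f \<alpha>)) \<in> th" using mono[OF i j _ ij] f a by blast
    then show "(h i \<alpha>, h j \<alpha>) \<in> r" unfolding h_def by (rule rI)
  qed
  obtain i0 where i0: "i0 \<in> Field th"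
    "\<forall>i\<in>Field th. (i0, i) \<in> th \<longrightarrow> {\<alpha> \<in> Field k. h i \<alpha> \<noteq> h i0 \<alpha>} \<in> I"
    using C4[unfolded P4_def, rule_format, OF wr, of S h] H1 H2 H3 by blast
  obtain c where c: "c \<in> Field th" "i0 \<noteq> c" "(i0,c) \<in> th" using th_succ[OF i0(1)] by blast
  have cI: "{\<alpha> \<in> Field k. h c \<alpha> \<noteq> h i0 \<alpha>} \<in> I" using i0(2) c by blast
  have "{\<alpha> \<in> Field k. (c, f \<alpha>) \<in> th} \<subseteq> {\<alpha> \<in> Field k. h c \<alpha> \<noteq> h i0 \<alpha>}"
  proof
    fix \<alpha> assume "\<alpha> \<in> {\<alpha> \<in> Field k. (c, f \<alpha>) \<in> th}"
    then have a: "\<alpha> \<in> Field k" and cf: "(c, f \<alpha>) \<in> th" by auto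
    have i0f: "(i0, f \<alpha>) \<in> th" using th_trans[OF c(3) cf] .
    have "h c \<alpha> = e c" unfolding h_def mn_def using cf by simp
    moreover have "h i0 \<alpha> = e i0" unfolding h_def mn_def using i0f by simp
    moreover have "e c \<noteq> e i0" using e(1) c(1) i0(1) c(2) unfolding inj_on_def by blast
    ultimately show "\<alpha> \<in> {\<alpha> \<in> Field k. h c \<alpha> \<noteq> h i0 \<alpha>}" using a by simp
  qed
  then have "{\<alpha> \<in> Field k. (c, f \<alpha>) \<in> th} \<in> I" using I_down[OF cI] by simp
  then show "\<exists>\<beta>\<in>Field th. {\<alpha> \<in> Field k. (\<beta>, f \<alpha>) \<in> th} \<in> I" using c(1) by blast
qed


lemma c1_c5: assumes ws: "weakly_saturated k th I" and ind: "indecomposable k th I"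
  shows "P5 k th I"
  unfolding P5_def
proof (intro allI impI, rule ccontr)
  fix f :: "'a \<Rightarrow> 'b" assume f: "\<forall>\<alpha>\<in>Field k. f \<alpha> \<in> Field th"
  assume N: "\<not> (\<exists>\<beta>\<in>Field th. {\<alpha> \<in> Field k. (\<beta>, f \<alpha>) \<in> th} \<in> I)"
  define D where "D b c = {\<alpha> \<in> Field k. (b, f \<alpha>) \<in> th \<and> (c, f \<alpha>) \<notin> th}" for b c
  have Dk: "D b c \<subseteq> Field k" for b c unfolding D_def by blast
  have step: "\<exists>c. c \<in> Field th \<and> D b c \<notin> I" if b: "b \<in> Field th" for b
  proof -
    define A where "A j = {\<alpha> \<in> Field k. f \<alpha> = j \<and> (b,j) \<in> th}" for j
    have Ak: "\<forall>j\<in>Field th. A j \<subseteq> Field k" unfolding A_def by blast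
    have "(\<Union>j\<in>Field th. A j) = {\<alpha> \<in> Field k. (b, f \<alpha>) \<in> th}" unfolding A_def using f by auto
    moreover have "{\<alpha> \<in> Field k. (b, f \<alpha>) \<in> th} \<notin> I" using N b by blast
    ultimately have "(\<Union>j\<in>Field th. A j) \<notin> I" by simp
    then obtain w where w: "w \<subseteq> Field th" "ordLess2 (card_of w) th" "(\<Union>j\<in>w. A j) \<notin> I"
      using ind[unfolded indecomposable_def, rule_format, OF conjI[OF Ak]] by blast
    obtain d where d: "d \<in> Field th" "\<forall>j\<in>w. (j,d) \<in> th \<and> j \<noteq> d"
      using th_bound_strict[OF w(1,2)] by blast
    have "(\<Union>j\<in>w. A j) \<subseteq> D b d"
    proof
      fix \<alpha> assume "\<alpha> \<in> (\<Union>j\<in>w. A j)"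
      then obtain j where j: "j \<in> w" "\<alpha> \<in> A j" by blast
      then have a: "\<alpha> \<in> Field k" "f \<alpha> = j" "(b,j) \<in> th" unfolding A_def by auto
      have jd: "(j,d) \<in> th" "j \<noteq> d" using d(2) j(1) by auto
      have "(d, f \<alpha>) \<notin> th"
      proof
        assume "(d, f \<alpha>) \<in> th"
        then have "j = d" using th_antisym[OF jd(1)] a(2) by simp
        then show False using jd(2) by simp
      qed
      then show "\<alpha> \<in> D b d" unfolding D_def using a by simp
    qed
    then have "D b d \<notin> I" using I_pos w(3) by blast
    then show ?thesis using d(1) by blast
  qed
  define g where "g b = (SOME c. c \<in> Field th \<and> D b c \<notin> I)" for b
  have g: "g b \<in> Field th \<and> D b (g b) \<notin> I" if "b \<in> Field th" for b
    unfolding g_def by (rule someI_ex[OF step[OF that]])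
  define F where "F = {Z. Z \<subseteq> Field th \<and> (\<forall>b\<in>Z. \<forall>b'\<in>Z. b \<noteq> b' \<longrightarrow> D b (g b) \<inter> D b' (g b') = {})}"
  have "\<forall>C\<in>chains F. \<Union>C \<in> F"
  proof
    fix C assume C: "C \<in> chains F"
    have CF: "C \<subseteq> F" using chainsD2[OF C] .
    have "\<Union>C \<subseteq> Field th" using CF unfolding F_def by blast
    moreover have "\<forall>b\<in>\<Union>C. \<forall>b'\<in>\<Union>C. b \<noteq> b' \<longrightarrow> D b (g b) \<inter> D b' (g b') = {}"
    proof (intro ballI impI)
      fix b b' assume b: "b \<in> \<Union>C" and b': "b' \<in> \<Union>C" and ne: "b \<noteq> b'"
      obtain Z where Z: "Z \<in> C" "b \<in> Z" using b by blast
      obtain Z' where Z': "Z' \<in> C" "b' \<in> Z'" using b' by blast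
      have "Z \<subseteq> Z' \<or> Z' \<subseteq> Z" using chainsD[OF C Z(1) Z'(1)] .
      then obtain W where W: "W \<in> C" "b \<in> W" "b' \<in> W" using Z Z' by blast
      have "W \<in> F" using CF W(1) by blast
      then show "D b (g b) \<inter> D b' (g b') = {}" using W ne unfolding F_def by blast
    qed
    ultimately show "\<Union>C \<in> F" unfolding F_def by blast
  qed
  then obtain M where MF: "M \<in> F" and Mmax: "\<forall>X\<in>F. M \<subseteq> X \<longrightarrow> X = M"
    using Zorn_Lemma[of F] by blast
  have Msub: "M \<subseteq> Field th" using MF unfolding F_def by blast
  have Mdisj: "\<And>b b'. b \<in> M \<Longrightarrow> b' \<in> M \<Longrightarrow> b \<noteq> b' \<Longrightarrow> D b (g b) \<inter> D b' (g b') = {}"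
    using MF unfolding F_def by blast
  have cof: "cofinal M th"
  proof (rule ccontr)
    assume "\<not> cofinal M th"
    then obtain a where a: "a \<in> Field th" "\<forall>b\<in>M. \<not> (a \<noteq> b \<and> (a,b) \<in> th)"
      unfolding cofinal_def by blast
    have ba: "(b,a) \<in> th" if "b \<in> M" for b
    proof -
      have "b \<in> Field th" using that Msub by blast
      show ?thesis
      proof (cases "a = b")
        case True
        then show ?thesis using th_refl[OF a(1)] by simp
      next
        case False
        then show ?thesis using a(2) that th_total[OF a(1) \<open>b \<in> Field th\<close>] by blast
      qed
    qed
    obtain c1 where c1: "c1 \<in> Field th" "a \<noteq> c1" "(a,c1) \<in> th" using th_succ[OF a(1)] by blast
    have "M \<subseteq> underS th c1"
    proof
      fix b assume b: "b \<in> M"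
      have bc: "(b,c1) \<in> th" using th_trans[OF ba[OF b] c1(3)] .
      have "b \<noteq> c1"
      proof
        assume "b = c1" then have "a = c1" using th_antisym[OF c1(3)] ba[OF b] by simp
        then show False using c1(2) by simp
      qed
      then show "b \<in> underS th c1" unfolding underS_def using bc by simp
    qed
    then have "ordLeq3 (card_of M) (card_of (underS th c1))" by (rule card_of_mono1)
    then have Msmall: "ordLess2 (card_of M) th" using th_underS[OF c1(1)] by (rule ordLeq_ordLess_trans)
    have "ordLeq3 (card_of (g ` M)) (card_of M)" by (rule card_of_image)
    then have gsmall: "ordLess2 (card_of (g ` M)) th" using Msmall by (rule ordLeq_ordLess_trans)
    have gsub: "g ` M \<subseteq> Field th" using g Msub by blast
    obtain a' where a': "a' \<in> Field th" "\<forall>b\<in>g ` M. (b,a') \<in> th" using th_bound[OF gsub gsmall] by blast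
    define m where "m = (if (a,a') \<in> th then a' else a)"
    have m: "m \<in> Field th" "(a,m) \<in> th" "(a',m) \<in> th"
      unfolding m_def using a(1) a'(1) th_total[OF a(1) a'(1)] th_refl[OF a(1)] th_refl[OF a'(1)] by auto
    obtain c where c: "c \<in> Field th" "m \<noteq> c" "(m,c) \<in> th" using th_succ[OF m(1)] by blast
    have below: "(x,c) \<in> th \<and> x \<noteq> c" if "(x,m) \<in> th" for x
    proof
      show "(x,c) \<in> th" using th_trans[OF that c(3)] .
      show "x \<noteq> c"
      proof
        assume "x = c" then have "m = c" using th_antisym[OF c(3)] that by simp
        then show False using c(2) by simp
      qed
    qed
    have bM: "(b,c) \<in> th \<and> b \<noteq> c" if "b \<in> M" for b
      using below th_trans[OF ba[OF that] m(2)] by blast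
    have gM: "(g b,c) \<in> th \<and> g b \<noteq> c" if "b \<in> M" for b
    proof -
      have "(g b, a') \<in> th" using a'(2) that by blast
      then show ?thesis using below th_trans[OF _ m(3)] by blast
    qed
    have disj: "D b (g b) \<inter> D c (g c) = {}" if b: "b \<in> M" for b
    proof (rule ccontr)
      assume "D b (g b) \<inter> D c (g c) \<noteq> {}"
      then obtain x where x1: "x \<in> D b (g b)" and x2: "x \<in> D c (g c)" by blast
      have xk: "x \<in> Field k" and ng: "(g b, f x) \<notin> th" using x1 unfolding D_def by auto
      have cf: "(c, f x) \<in> th" using x2 unfolding D_def by auto
      have gbc: "(g b,c) \<in> th" "g b \<noteq> c" using gM[OF b] by auto
      have "(g b, f x) \<in> th" using th_trans[OF gbc(1) cf] .
      then show False using ng by simp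
    qed
    have "insert c M \<in> F"
    proof -
      have "insert c M \<subseteq> Field th" using Msub c(1) by blast
      moreover have "\<forall>b\<in>insert c M. \<forall>b'\<in>insert c M. b \<noteq> b' \<longrightarrow> D b (g b) \<inter> D b' (g b') = {}"
      proof (intro ballI impI)
        fix b b' assume b: "b \<in> insert c M" and b': "b' \<in> insert c M" and ne: "b \<noteq> b'"
        show "D b (g b) \<inter> D b' (g b') = {}"
        proof (cases "b = c")
          case True
          then have "b' \<in> M" using b' ne by blast
          then show ?thesis using disj True by blast
        next
          case False
          then have bm: "b \<in> M" using b by blast
          show ?thesis
          proof (cases "b' = c")
            case True
            then show ?thesis using disj[OF bm] by blast
          next
            case False
            then have "b' \<in> M" using b' by blast
            then show ?thesis using Mdisj bm ne by blast
          qed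
        qed
      qed
      ultimately show ?thesis unfolding F_def by blast
    qed
    then have "insert c M = M" using Mmax by blast
    then have "c \<in> M" by blast
    then show False using bM by blast
  qed
  have "ordIso2 (card_of M) th" using threg Msub cof unfolding regularCard_def by blast
  moreover have "ordIso2 (card_of (Field th)) th" using thC by (simp add: card_of_Field_ordIso)
  ultimately have "ordIso2 (card_of (Field th)) (card_of M)"
    using ordIso_transitive ordIso_symmetric by blast
  then obtain \<phi> where phi: "bij_betw \<phi> (Field th) M" using card_of_ordIso by blast
  have phiM: "\<phi> i \<in> M" if "i \<in> Field th" for i using phi that unfolding bij_betw_def by blast
  have phiinj: "\<phi> i \<noteq> \<phi> j" if "i \<in> Field th" "j \<in> Field th" "i \<noteq> j" for i j
    using phi that unfolding bij_betw_def inj_on_def by blast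
  have phisurj: "\<exists>i\<in>Field th. b = \<phi> i" if "b \<in> M" for b
    using phi that unfolding bij_betw_def by blast
  obtain i0 where i0: "i0 \<in> Field th" using th_ne by blast
  define R where "R = Field k - (\<Union>b\<in>M. D b (g b))"
  define P where "P i = (if i = i0 then D (\<phi> i) (g (\<phi> i)) \<union> R else D (\<phi> i) (g (\<phi> i)))" for i
  have PD: "D (\<phi> i) (g (\<phi> i)) \<subseteq> P i" for i unfolding P_def by auto
  have P1: "\<forall>i\<in>Field th. P i \<subseteq> Field k \<and> P i \<notin> I"
  proof
    fix i assume i: "i \<in> Field th"
    have "P i \<subseteq> Field k" unfolding P_def R_def using Dk by auto
    moreover have "D (\<phi> i) (g (\<phi> i)) \<notin> I" using g phiM[OF i] Msub by blast
    then have "P i \<notin> I" using I_pos PD by blast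
    ultimately show "P i \<subseteq> Field k \<and> P i \<notin> I" by simp
  qed
  have RD: "R \<inter> D (\<phi> j) (g (\<phi> j)) = {}" if "j \<in> Field th" for j
    using phiM[OF that] unfolding R_def by blast
  have P2: "\<forall>i\<in>Field th. \<forall>j\<in>Field th. i \<noteq> j \<longrightarrow> P i \<inter> P j = {}"
  proof (intro ballI impI)
    fix i j assume i: "i \<in> Field th" and j: "j \<in> Field th" and ne: "i \<noteq> j"
    have dd: "D (\<phi> i) (g (\<phi> i)) \<inter> D (\<phi> j) (g (\<phi> j)) = {}"
      using Mdisj[OF phiM[OF i] phiM[OF j] phiinj[OF i j ne]] .
    show "P i \<inter> P j = {}"
    proof (cases "i = i0")
      case True
      then have "j \<noteq> i0" using ne by simp
      then show ?thesis unfolding P_def using True dd RD[OF j] by auto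
    next
      case False
      show ?thesis
      proof (cases "j = i0")
        case True
        then show ?thesis unfolding P_def using False dd RD[OF i] by auto
      next
        case False2: False
        then show ?thesis unfolding P_def using False dd by auto
      qed
    qed
  qed
  have P3: "(\<Union>i\<in>Field th. P i) = Field k"
  proof
    show "(\<Union>i\<in>Field th. P i) \<subseteq> Field k" using P1 by blast
    show "Field k \<subseteq> (\<Union>i\<in>Field th. P i)"
    proof
      fix x assume x: "x \<in> Field k"
      show "x \<in> (\<Union>i\<in>Field th. P i)"
      proof (cases "x \<in> (\<Union>b\<in>M. D b (g b))")
        case True
        then obtain b where b: "b \<in> M" "x \<in> D b (g b)" by blast
        then obtain i where i: "i \<in> Field th" "b = \<phi> i" using phisurj by blast
        then have "x \<in> P i" using PD b(2) by blast
        then show ?thesis using i(1) by blast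
      next
        case False
        then have "x \<in> R" unfolding R_def using x by blast
        then have "x \<in> P i0" unfolding P_def by simp
        then show ?thesis using i0 by blast
      qed
    qed
  qed
  have "\<exists>P :: 'b \<Rightarrow> 'a set.
          (\<forall>i\<in>Field th. P i \<subseteq> Field k \<and> P i \<notin> I) \<and>
          (\<forall>i\<in>Field th. \<forall>j\<in>Field th. i \<noteq> j \<longrightarrow> P i \<inter> P j = {}) \<and>
          (\<Union>i\<in>Field th. P i) = Field k"
    using P1 P2 P3 by blast
  then show False using ws unfolding weakly_saturated_def by blast
qed

end

theorem theorem2p6:
  fixes k :: "'a rel" and \<theta> :: "'b rel" and I :: "'a set set"
  assumes kappa: "Card_order k"
    and ideal: "ideal_on k I"
    and theta: "Cinfinite \<theta>" "regularCard \<theta>"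
    and less: "ordLess2 \<theta> k"
  defines "C1 \<equiv> weakly_saturated k \<theta> I \<and> indecomposable k \<theta> I"
    and "C2 \<equiv> (\<forall>B :: 'b \<Rightarrow> 'a set.
             (\<forall>i\<in>Field \<theta>. B i \<subseteq> Field k) \<and>
             (\<forall>i\<in>Field \<theta>. \<forall>j\<in>Field \<theta>. (i, j) \<in> \<theta> \<longrightarrow> B i \<subseteq> B j) \<longrightarrow>
             (\<exists>i0\<in>Field \<theta>. \<forall>i\<in>Field \<theta>. (i0, i) \<in> \<theta> \<longrightarrow>
                 eq_mod I (B i) (\<Union>j\<in>Field \<theta>. B j)))"
    and "C3 \<equiv> (\<forall>A :: 'b \<Rightarrow> 'a set.
             (\<forall>i\<in>Field \<theta>. A i \<subseteq> Field k \<and> A i \<notin> I) \<longrightarrow>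
             (\<Inter>i\<in>Field \<theta>. \<Union>j\<in>{j \<in> Field \<theta>. (i, j) \<in> \<theta>}. A j) \<noteq> {})"
    and "C4 \<equiv> (\<forall>r :: 'a rel. Well_order r \<longrightarrow>
             (\<forall>(S :: 'a \<Rightarrow> 'a set) (h :: 'b \<Rightarrow> 'a \<Rightarrow> 'a).
               (\<forall>\<alpha>\<in>Field k. S \<alpha> \<subseteq> Field r \<and> ordLess2 (card_of (S \<alpha>)) \<theta>) \<and>
               (\<forall>i\<in>Field \<theta>. \<forall>\<alpha>\<in>Field k. h i \<alpha> \<in> S \<alpha>) \<and>
               (\<forall>i\<in>Field \<theta>. \<forall>j\<in>Field \<theta>. (i, j) \<in> \<theta> \<longrightarrow>
                   (\<forall>\<alpha>\<in>Field k. (h i \<alpha>, h j \<alpha>) \<in> r)) \<longrightarrow>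
               (\<exists>i0\<in>Field \<theta>. \<forall>i\<in>Field \<theta>. (i0, i) \<in> \<theta> \<longrightarrow>
                   {\<alpha> \<in> Field k. h i \<alpha> \<noteq> h i0 \<alpha>} \<in> I)))"
    and "C5 \<equiv> (\<forall>f :: 'a \<Rightarrow> 'b. (\<forall>\<alpha>\<in>Field k. f \<alpha> \<in> Field \<theta>) \<longrightarrow>
             (\<exists>\<beta>\<in>Field \<theta>. {\<alpha> \<in> Field k. (\<beta>, f \<alpha>) \<in> \<theta>} \<in> I))"
  shows "(C1 \<longleftrightarrow> C2) \<and> (C1 \<longleftrightarrow> C3) \<and> (C1 \<longleftrightarrow> C4) \<and> (C1 \<longleftrightarrow> C5)"
proof -
  note H = kappa ideal theta less
  have i15: "C1 \<Longrightarrow> C5" unfolding C1_def C5_def using c1_c5[OF H] unfolding P5_def by blast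
  have i53: "C5 \<Longrightarrow> C3" unfolding C3_def C5_def using c5_c3[OF H] unfolding P5_def P3_def by blast
  have i31: "C3 \<Longrightarrow> C1" unfolding C1_def C3_def using c3_ws[OF H] c3_ind[OF H] unfolding P3_def by blast
  have i52: "C5 \<Longrightarrow> C2" unfolding C2_def C5_def using c5_c2[OF H] unfolding P5_def P2_def by blast
  have i21: "C2 \<Longrightarrow> C1" unfolding C1_def C2_def using c2_ws[OF H] c2_ind[OF H] unfolding P2_def by blast
  have i54: "C5 \<Longrightarrow> C4" unfolding C4_def C5_def using c5_c4[OF H] unfolding P5_def P4_def by blast
  have i45: "C4 \<Longrightarrow> C5" unfolding C4_def C5_def using c4_c5[OF H] unfolding P5_def P4_def by blast
  show ?thesis using i15 i53 i31 i52 i21 i54 i45 by blast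
qed

end
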